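(* Let $\mathcal{L}(x^* )\in\mathbb{R}^{c\times c}$ be the weighted Laplacian of a complex-balanced mass action chemical reaction network with complex-equilibrium $x^*\in\mathbb{R}_+^m$ (defined in the context), and let $B\in\mathbb{R}^{c\times r}$ be the incidence matrix of its graph of complexes. Then for every $\gamma\in\mathbb{R}^c$, \[ \gamma^T\mathcal{L}(x^* )\,\mathrm{Exp}(\gamma)\ \ge\ 0, \] and $\gamma^T\mathcal{L}(x^* )\,\mathrm{Exp}(\gamma)=0$ if and only if $B^T\gamma=0$.
   Context: A mass action chemical reaction network has $m$ species with concentration vector $x\in\mathbb{R}_+^m$ (strictly positive entries), $c$ complexes and $r$ reactions. The complex-stoichiometric matrix $Z\in\mathbb{R}^{m\times c}$ has nonnegative integer entries; its $\alpha$-th column $Z_\alpha$ gives the composition of complex $\alpha$ in the species. The graph of complexes has the $c$ complexes as vertices and a directed edge for each reaction $j$, from its substrate complex $\mathcal{S}_j$ to its product complex $\mathcal{P}_j$; its incidence matrix $B\in\mathbb{R}^{c\times r}$ has $(\alpha,j)$ entry $-1$ if $\alpha=\mathcal{S}_j$, $+1$ if $\alpha=\mathcal{P}_j$, $0$ otherwise. Each reaction $j$ has rate constant $k_j>0$ and rate $v_j(x)=k_j\exp(Z_{\mathcal{S}_j}^T\mathrm{Ln}(x))$, and the dynamics are $\dot x=ZBv(x)$. For $x\in\mathbb{R}_+^m$, $\mathrm{Ln}(x)$ is the componentwise logarithm, and for $y\in\mathbb{R}^c$, $\mathrm{Exp}(y)$ is the componentwise exponential; $x/x^*$ denotes componentwise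 division. Let $a_{\pi\sigma}=\sum\{k_j:\ \mathcal{S}_j=\sigma,\ \mathcal{P}_j=\pi\}$ (zero if no such reaction), $A=(a_{\pi\sigma})$, $\Delta$ the diagonal matrix whose $\rho$-th diagonal entry is the $\rho$-th column sum of $A$, and $L=\Delta-A$; then $Bv(x)=-L\,\mathrm{Exp}(Z^T\mathrm{Ln}(x))$. A complex-equilibrium is $x^*\in\mathbb{R}_+^m$ with $Bv(x^* )=0$; the network is complex-balanced if a complex-equilibrium exists. Given a complex-equilibrium $x^*$, set $K(x^* )=\mathrm{diag}_{i=1}^c(\exp(Z_i^T\mathrm{Ln}(x^* )))$ and $\mathcal{L}(x^* )=LK(x^* )$ (the weighted Laplacian); it satisfies $\mathbf{1}_c^T\mathcal{L}(x^* )=0$ and $\mathcal{L}(x^* )\mathbf{1}_c=0$, where $\mathbf{1}_c$ is the all-ones vector. *)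

theory Defs
  imports "HOL-Analysis.Analysis"
begin

text \<open>Species are indexed by the finite type 'm,
complexes by the finite type 'c, reactions by the finite type 'r.
Z :: real^'c^'m is the complex-stoichiometric matrix (Z $ i $ \<alpha> = entry in row i, column \<alpha>).
S j / P j are the substrate / product complex of reaction j; k j its rate constant.\<close>

definition Exp_vec :: "real^'n \<Rightarrow> real^'n" where
  "Exp_vec y = (\<chi> i. exp (y $ i))"

definition Ln_vec :: "real^'n \<Rightarrow> real^'n" where
  "Ln_vec x = (\<chi> i. ln (x $ i))"

definition incidence :: "('r \<Rightarrow> 'c) \<Rightarrow> ('r \<Rightarrow> 'c) \<Rightarrow> real^'r^'c" where
  "incidence S P = (\<chi> \<alpha> j. (if \<alpha> = P j then 1 else 0) - (if \<alpha> = S j then 1 else 0))"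

definition rates :: "('r \<Rightarrow> real) \<Rightarrow> real^'c^'m \<Rightarrow> ('r \<Rightarrow> 'c) \<Rightarrow> real^'m \<Rightarrow> real^'r" where
  "rates k Z S x = (\<chi> j. k j * exp (column (S j) Z \<bullet> Ln_vec x))"

definition rate_matrix :: "('r::finite \<Rightarrow> real) \<Rightarrow> ('r \<Rightarrow> 'c) \<Rightarrow> ('r \<Rightarrow> 'c) \<Rightarrow> real^'c^'c" where
  "rate_matrix k S P = (\<chi> \<pi> \<sigma>. \<Sum>j\<in>{j. S j = \<sigma> \<and> P j = \<pi>}. k j)"

definition laplacian :: "('r::finite \<Rightarrow> real) \<Rightarrow> ('r \<Rightarrow> 'c::finite) \<Rightarrow> ('r \<Rightarrow> 'c) \<Rightarrow> real^'c^'c" where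
  "laplacian k S P =
     (\<chi> \<rho> \<sigma>. if \<rho> = \<sigma> then (\<Sum>\<pi>\<in>UNIV. rate_matrix k S P $ \<pi> $ \<rho>) else 0) - rate_matrix k S P"

definition complex_equilibrium ::
  "('r::finite \<Rightarrow> real) \<Rightarrow> real^'c^'m \<Rightarrow> ('r \<Rightarrow> 'c::finite) \<Rightarrow> ('r \<Rightarrow> 'c) \<Rightarrow> real^'m \<Rightarrow> bool" where
  "complex_equilibrium k Z S P x \<longleftrightarrow>
     (\<forall>i. x $ i > 0) \<and> incidence S P *v rates k Z S x = 0"

definition Kdiag :: "real^'c^'m \<Rightarrow> real^'m \<Rightarrow> real^'c^'c" where
  "Kdiag Z x = (\<chi> \<alpha> \<beta>. if \<alpha> = \<beta> then exp (column \<alpha> Z \<bullet> Ln_vec x) else 0)"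

definition weighted_laplacian ::
  "('r::finite \<Rightarrow> real) \<Rightarrow> real^'c^'m \<Rightarrow> ('r \<Rightarrow> 'c::finite) \<Rightarrow> ('r \<Rightarrow> 'c) \<Rightarrow> real^'m \<Rightarrow> real^'c^'c" where
  "weighted_laplacian k Z S P x = laplacian k S P ** Kdiag Z x"

end

theory Submission
  imports Defs
begin

lemma key_ineq:
  fixes a b :: real
  shows "exp a * (a - b) - exp a + exp b \<ge> 0"
    and "exp a * (a - b) - exp a + exp b = 0 \<longleftrightarrow> a = b"
proof -
  have e: "exp b = exp a * exp (-(a - b))" by (simp add: exp_minus exp_diff field_simps)
  have "exp a * (a - b) - exp a + exp b = exp a * (exp (-(a-b)) - (1 - (a - b)))"
    by (subst e) (simp add: algebra_simps)
  moreover have "exp (-(a-b)) - (1 - (a - b)) \<ge> 0" using exp_minus_ge[of "a-b"] by simp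
  moreover have "exp (-(a-b)) - (1 - (a - b)) = 0 \<longleftrightarrow> a = b"
    using exp_minus_greater[of "a-b"] exp_minus_ge[of "a-b"] by auto
  ultimately show "exp a * (a - b) - exp a + exp b \<ge> 0"
    and "exp a * (a - b) - exp a + exp b = 0 \<longleftrightarrow> a = b" by auto
qed

lemma swap_lemma:
  fixes f :: "'c::finite \<Rightarrow> real" and h :: "'r::finite \<Rightarrow> real"
  shows "(\<Sum>\<rho>\<in>UNIV. f \<rho> * (\<Sum>j\<in>UNIV. h j * ((if Q j = \<rho> then 1 else 0) - (if R j = \<rho> then 1 else 0))))
     = (\<Sum>j\<in>UNIV. h j * (f (Q j) - f (R j)))"
proof -
  have "(\<Sum>\<rho>\<in>UNIV. f \<rho> * (\<Sum>j\<in>UNIV. h j * ((if Q j = \<rho> then 1 else 0) - (if R j = \<rho> then 1 else 0))))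
    = (\<Sum>j\<in>UNIV. \<Sum>\<rho>\<in>UNIV. h j * ((if Q j = \<rho> then f \<rho> else 0) - (if R j = \<rho> then f \<rho> else 0)))"
    by (subst sum.swap) (auto simp: sum_distrib_left intro!: sum.cong split: if_splits)
  also have "\<dots> = (\<Sum>j\<in>UNIV. h j * (f (Q j) - f (R j)))"
    by (simp add: sum_distrib_left[symmetric] sum_subtractf)
  finally show ?thesis .
qed

theorem lemma1:
  fixes k :: "'r::finite \<Rightarrow> real"
    and Z :: "real^'c::finite^'m::finite"
    and S P :: "'r \<Rightarrow> 'c"
    and xs :: "real^'m"
    and \<gamma> :: "real^'c"
  assumes k_pos: "\<And>j. k j > 0"
    and Z_nat: "\<And>i \<alpha>. Z $ i $ \<alpha> \<in> \<nat>"
    and eq: "complex_equilibrium k Z S P xs"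
  shows "\<gamma> \<bullet> (weighted_laplacian k Z S P xs *v Exp_vec \<gamma>) \<ge> 0
    \<and> (\<gamma> \<bullet> (weighted_laplacian k Z S P xs *v Exp_vec \<gamma>) = 0
         \<longleftrightarrow> transpose (incidence S P) *v \<gamma> = 0)"
proof -
  define w where "w \<sigma> = exp (column \<sigma> Z \<bullet> Ln_vec xs)" for \<sigma>
  define A where "A = rate_matrix k S P"
  define v where "v j = k j * w (S j)" for j
  define g where "g j = v j * exp (\<gamma> $ S j)" for j
  have A_eq: "A $ \<pi> $ \<sigma> = (\<Sum>j\<in>UNIV. if S j = \<sigma> \<and> P j = \<pi> then k j else 0)" for \<pi> \<sigma>
    unfolding A_def rate_matrix_def by (simp add: sum.If_cases Int_def)
  have colsum: "(\<Sum>\<pi>\<in>UNIV. A $ \<pi> $ \<rho>) = (\<Sum>j\<in>UNIV. if S j = \<rho> then k j else 0)" for \<rho>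
  proof -
    have "(\<Sum>\<pi>\<in>UNIV. A $ \<pi> $ \<rho>) = (\<Sum>\<pi>\<in>UNIV. \<Sum>j\<in>UNIV. if S j = \<rho> \<and> P j = \<pi> then k j else 0)"
      unfolding A_eq ..
    also have "\<dots> = (\<Sum>j\<in>UNIV. \<Sum>\<pi>\<in>UNIV. if S j = \<rho> \<and> P j = \<pi> then k j else 0)"
      by (rule sum.swap)
    also have "\<dots> = (\<Sum>j\<in>UNIV. if S j = \<rho> then k j else 0)"
      by (auto intro!: sum.cong)
    finally show ?thesis .
  qed
  have WL: "weighted_laplacian k Z S P xs $ \<rho> $ \<sigma> = laplacian k S P $ \<rho> $ \<sigma> * w \<sigma>" for \<rho> \<sigma>
    unfolding weighted_laplacian_def matrix_matrix_mult_def Kdiag_def w_def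
    by (simp add: if_distrib[of "\<lambda>x. _ * x"] cong: if_cong)
  have rowv: "(weighted_laplacian k Z S P xs *v Exp_vec \<gamma>) $ \<rho>
      = (\<Sum>j\<in>UNIV. g j * ((if S j = \<rho> then 1 else 0) - (if P j = \<rho> then 1 else 0)))" for \<rho>
  proof -
    have "(weighted_laplacian k Z S P xs *v Exp_vec \<gamma>) $ \<rho>
        = (\<Sum>\<sigma>\<in>UNIV. ((if \<rho> = \<sigma> then (\<Sum>\<pi>\<in>UNIV. A $ \<pi> $ \<rho>) else 0) - A $ \<rho> $ \<sigma>) * w \<sigma> * exp (\<gamma> $ \<sigma>))"
      unfolding matrix_vector_mult_def WL laplacian_def Exp_vec_def A_def by simp
    also have "\<dots> = (\<Sum>\<pi>\<in>UNIV. A $ \<pi> $ \<rho>) * w \<rho> * exp (\<gamma> $ \<rho>)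
         - (\<Sum>\<sigma>\<in>UNIV. A $ \<rho> $ \<sigma> * w \<sigma> * exp (\<gamma> $ \<sigma>))"
      by (simp add: left_diff_distrib sum_subtractf if_distrib[of "\<lambda>x. x * _"] cong: if_cong)
    also have "(\<Sum>\<sigma>\<in>UNIV. A $ \<rho> $ \<sigma> * w \<sigma> * exp (\<gamma> $ \<sigma>))
        = (\<Sum>j\<in>UNIV. if P j = \<rho> then g j else 0)"
    proof -
      have "(\<Sum>\<sigma>\<in>UNIV. A $ \<rho> $ \<sigma> * w \<sigma> * exp (\<gamma> $ \<sigma>))
          = (\<Sum>\<sigma>\<in>UNIV. \<Sum>j\<in>UNIV. if S j = \<sigma> \<and> P j = \<rho> then g j else 0)"
        unfolding A_eq g_def v_def by (auto simp: sum_distrib_right intro!: sum.cong)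
      also have "\<dots> = (\<Sum>j\<in>UNIV. \<Sum>\<sigma>\<in>UNIV. if S j = \<sigma> \<and> P j = \<rho> then g j else 0)"
        by (rule sum.swap)
      also have "\<dots> = (\<Sum>j\<in>UNIV. if P j = \<rho> then g j else 0)"
        by (auto intro!: sum.cong)
      finally show ?thesis .
    qed
    also have "(\<Sum>\<pi>\<in>UNIV. A $ \<pi> $ \<rho>) * w \<rho> * exp (\<gamma> $ \<rho>) = (\<Sum>j\<in>UNIV. if S j = \<rho> then g j else 0)"
      unfolding colsum g_def v_def by (auto simp: sum_distrib_right intro!: sum.cong)
    finally show ?thesis
      by (simp add: right_diff_distrib sum_subtractf if_distrib[of "\<lambda>x. _ * x"] cong: if_cong)
  qed
  have Q: "\<gamma> \<bullet> (weighted_laplacian k Z S P xs *v Exp_vec \<gamma>) = (\<Sum>j\<in>UNIV. g j * (\<gamma> $ S j - \<gamma> $ P j))"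
    unfolding inner_vec_def rowv using swap_lemma[of "\<lambda>\<rho>. \<gamma> $ \<rho>" g S P] by simp
  have Bv: "(\<Sum>j\<in>UNIV. v j * ((if P j = \<rho> then 1 else 0) - (if S j = \<rho> then 1 else 0))) = 0" for \<rho>
  proof -
    have "(incidence S P *v rates k Z S xs) $ \<rho> = 0" using eq unfolding complex_equilibrium_def by simp
    thus ?thesis unfolding matrix_vector_mult_def incidence_def rates_def v_def w_def
      by (simp add: mult.commute eq_commute[of \<rho>])
  qed
  have zero: "(\<Sum>j\<in>UNIV. v j * (exp (\<gamma> $ P j) - exp (\<gamma> $ S j))) = 0"
    using swap_lemma[of "\<lambda>\<rho>. exp (\<gamma> $ \<rho>)" v P S] Bv by simp
  define T where "T j = v j * (exp (\<gamma> $ S j) * (\<gamma> $ S j - \<gamma> $ P j) - exp (\<gamma> $ S j) + exp (\<gamma> $ P j))" for j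
  have QT: "\<gamma> \<bullet> (weighted_laplacian k Z S P xs *v Exp_vec \<gamma>) = (\<Sum>j\<in>UNIV. T j)"
    unfolding Q using zero by (simp add: T_def g_def algebra_simps sum.distrib sum_subtractf)
  have vpos: "v j > 0" for j unfolding v_def w_def using k_pos by simp
  have Tnn: "T j \<ge> 0" for j unfolding T_def using vpos[of j] key_ineq(1) by simp
  have T0: "T j = 0 \<longleftrightarrow> \<gamma> $ S j = \<gamma> $ P j" for j
    unfolding T_def using vpos[of j] key_ineq(2) by simp
  have BT: "transpose (incidence S P) *v \<gamma> = 0 \<longleftrightarrow> (\<forall>j. \<gamma> $ S j = \<gamma> $ P j)"
  proof -
    have "(transpose (incidence S P) *v \<gamma>) $ j = \<gamma> $ P j - \<gamma> $ S j" for j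
      unfolding matrix_vector_mult_def transpose_def incidence_def
      by (simp add: left_diff_distrib sum_subtractf if_distrib[of "\<lambda>x. x * _"] cong: if_cong)
    thus ?thesis by (auto simp: vec_eq_iff)
  qed
  show ?thesis unfolding QT BT
    using Tnn T0 sum_nonneg_eq_0_iff[of UNIV T] by (auto intro: sum_nonneg)
qed

end
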